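(* Let $k\ge 2$, $n\ge1$, and let $L_n$ and $\varphi:L_n\to E^{n-1}$ be as in the context. Then $\varphi$ is surjective.
   Context: $E=\{0,\dots,k-1\}$. For $\mathbf a\in E^n$, $w(\mathbf a)=a_1+\dots+a_n$, and $\mathcal B_t=\{\mathbf a\in E^n: w(\mathbf a)=t\}$. Let $g=\lfloor n(k-1)/2\rfloor$ and $C_i=\{\mathbf a\in E^n: a_1=i\}$. Define $L_n=(\mathcal B_0\cup\dots\cup\mathcal B_g)\cap(C_0\cup C_{k-1})$ if $n(k-1)$ is odd, and $L_n=((\mathcal B_0\cup\dots\cup\mathcal B_{g-1})\cap(C_0\cup C_{k-1}))\cup(\mathcal B_g\cap C_0)$ if $n(k-1)$ is even. For $a\in E$ let $\overline a=k-1-a$. Define $\varphi(a_1,\dots,a_n)=(a_2,\dots,a_n)$ if $a_1=0$ and $\varphi(a_1,\dots,a_n)=(\overline{a}_2,\dots,\overline{a}_n)$ if $a_1=k-1$. *)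

theory Defs
  imports Main
begin

text \<open>Vectors in E^n, E = {0,...,k-1}, are lists of length n; the coordinate a_1 is a ! 0.\<close>

definition Evec :: "nat \<Rightarrow> nat \<Rightarrow> nat list set" where
  "Evec k n = {a. length a = n \<and> (\<forall>x\<in>set a. x < k)}"

definition wt :: "nat list \<Rightarrow> nat" where
  "wt a = sum_list a"

definition Blev :: "nat \<Rightarrow> nat \<Rightarrow> nat \<Rightarrow> nat list set" where
  "Blev k n t = {a \<in> Evec k n. wt a = t}"

definition Cfst :: "nat \<Rightarrow> nat \<Rightarrow> nat \<Rightarrow> nat list set" where
  "Cfst k n i = {a \<in> Evec k n. a ! 0 = i}"

definition gmid :: "nat \<Rightarrow> nat \<Rightarrow> nat" where
  "gmid k n = (n * (k - 1)) div 2"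

definition Lset :: "nat \<Rightarrow> nat \<Rightarrow> nat list set" where
  "Lset k n =
    (if odd (n * (k - 1))
     then (\<Union>t\<in>{0..gmid k n}. Blev k n t) \<inter> (Cfst k n 0 \<union> Cfst k n (k - 1))
     else ((\<Union>t\<in>{0..<gmid k n}. Blev k n t) \<inter> (Cfst k n 0 \<union> Cfst k n (k - 1)))
          \<union> (Blev k n (gmid k n) \<inter> Cfst k n 0))"

definition cbar :: "nat \<Rightarrow> nat \<Rightarrow> nat" where
  "cbar k a = k - 1 - a"

definition phi :: "nat \<Rightarrow> nat list \<Rightarrow> nat list" where
  "phi k a = (if a ! 0 = 0 then tl a
              else if a ! 0 = k - 1 then map (cbar k) (tl a)
              else undefined)"

end

theory Submission
  imports Defs
begin

lemma sum_cbar: "\<forall>x\<in>set b. x < k \<Longrightarrow> sum_list (map (cbar k) b) + sum_list b = length b * (k - 1)"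
  by (induction b) (auto simp: cbar_def)

lemma cbar_cbar: "\<forall>x\<in>set b. x < k \<Longrightarrow> map (cbar k) (map (cbar k) b) = b"
  by (induction b) (auto simp: cbar_def)

lemma aux_odd: "odd (N::nat) \<Longrightarrow> \<not> s \<le> N div 2 \<Longrightarrow> N - s \<le> N div 2" by presburger
lemma aux_even: "even (N::nat) \<Longrightarrow> s \<le> N \<Longrightarrow> \<not> s \<le> N div 2 \<Longrightarrow> N - s < N div 2" by presburger

theorem lemma3:
  fixes k n :: nat
  assumes "k \<ge> 2" and "n \<ge> 1"
  shows "phi k ` Lset k n = Evec k (n - 1)"
proof
  show "phi k ` Lset k n \<subseteq> Evec k (n - 1)"
  proof
    fix c assume "c \<in> phi k ` Lset k n"
    then obtain a where a: "a \<in> Lset k n" "c = phi k a" by blast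
    then have ae: "a \<in> Evec k n" and a0: "a ! 0 = 0 \<or> a ! 0 = k - 1"
      unfolding Lset_def Blev_def Cfst_def by (auto split: if_splits)
    have "\<forall>x\<in>set (tl a). x < k" using ae unfolding Evec_def by (cases a) auto
    moreover have "length (tl a) = n - 1" using ae unfolding Evec_def by auto
    ultimately show "c \<in> Evec k (n - 1)" using a0 a(2) assms
      unfolding phi_def Evec_def cbar_def by auto
  qed
next
  show "Evec k (n - 1) \<subseteq> phi k ` Lset k n"
  proof
    fix b assume b: "b \<in> Evec k (n - 1)"
    then have bl: "length b = n - 1" and bk: "\<forall>x\<in>set b. x < k" unfolding Evec_def by auto
    have sc: "sum_list (map (cbar k) b) + sum_list b = (n - 1) * (k - 1)"
      using sum_cbar[OF bk] bl by simp
    have nn: "n * (k - 1) = (n - 1) * (k - 1) + (k - 1)" using assms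
      by (cases n) auto
    show "b \<in> phi k ` Lset k n"
    proof (cases "sum_list b \<le> gmid k n")
      case True
      have e: "0 # b \<in> Evec k n" using bl bk assms unfolding Evec_def by auto
      have "0 # b \<in> Lset k n"
        using True e unfolding Lset_def Blev_def Cfst_def wt_def
        by (cases "sum_list b = gmid k n") auto
      moreover have "phi k (0 # b) = b" unfolding phi_def by simp
      ultimately show ?thesis by force
    next
      case False
      let ?a = "(k - 1) # map (cbar k) b"
      have e: "?a \<in> Evec k n" using bl bk assms unfolding Evec_def cbar_def by auto
      have w: "wt ?a = n * (k - 1) - sum_list b" unfolding wt_def using sc nn by (simp only: sum_list.Cons) linarith
      have "?a \<in> Lset k n"
      proof (cases "odd (n * (k - 1))")
        case True
        have "wt ?a \<le> gmid k n" using w False True unfolding gmid_def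
          by (metis aux_odd)
        then show ?thesis using True e unfolding Lset_def Blev_def Cfst_def by auto
      next
        case F: False
        have "wt ?a < gmid k n"
          proof -
          have "sum_list b \<le> n * (k - 1)" using sc nn by linarith
          then show ?thesis using w False F aux_even unfolding gmid_def by metis
        qed
        then show ?thesis using F e unfolding Lset_def Blev_def Cfst_def by auto
      qed
      moreover have "phi k ?a = b" unfolding phi_def using assms cbar_cbar[OF bk] by simp
      ultimately show ?thesis by force
    qed
  qed
qed

end
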